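(* Consider the online instance reservation problem described in the context, with parameters $p>0$, $\alpha\in[0,1)$, $\tau\ge1$, and $\beta=1/(1-\alpha)$. The deterministic online algorithm $A_\beta$ is $(2-\alpha)$-competitive: for every $T$ and every demand sequence $\mathbf d=(d_1,\dots,d_T)$, $C_{A_\beta}(\mathbf d)\le (2-\alpha)\,C_{\mathrm{OPT}}(\mathbf d)$, where $C_{A_\beta}(\mathbf d)$ is the cost incurred by $A_\beta$ and $C_{\mathrm{OPT}}(\mathbf d)$ is the optimal offline cost.
   Context: Instance reservation problem: time is slotted $t=1,2,\dots,T$. At each time $t$ a demand $d_t\in\{0,1,2,\dots\}$ arrives; set $d_t=0$ for $t\le 0$. A user chooses integers $o_t\ge 0$ (on-demand instances used at $t$) and $r_t\ge 0$ (instances newly reserved at $t$; $r_t=0$ for $t\le 0$), subject to $o_t+\sum_{i=t-\tau+1}^{t} r_i\ge d_t$ for all $t$, where $\tau$ is the reservation period. The reservation fee is normalized to $1$, the on-demand rate is $p$ (the paper assumes throughout $p\ll 1$), and reserved instances run at rate $\alpha p$. The total cost is $C=\sum_{t=1}^T\big(o_t p + r_t + \alpha p(d_t-o_t)\big)$. $C_{\mathrm{OPT}}(\mathbf d)$ is the minimum of $C$ over all feasible integer $(o_t,r_t)$ given the whole sequence. An online algorithm chooses $o_t,r_t$ knowing only $d_1,\dots,d_t$. Algorithm $A_z$ (threshold $z\ge0$): maintain integers $x_i$, initially $x_i=0$ for all $i$. At each time $t$, upon arrival of $d_t$: while $p\cdot\big|\{i: t-\tau+1\le i\le t,\ d_i>x_i\}\big|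 > z$: increase $r_t$ by $1$; increase $x_i$ by $1$ for $i=t,\dots,t+\tau-1$; increase $x_i$ by $1$ for $i=t-\tau+1,\dots,t-1$. Then set $o_t=\max\{d_t-x_t,0\}$. $A_\beta$ is $A_z$ with $z=\beta$. *)

theory Defs
  imports Complex_Main
begin

(* Time slots are t = 1,2,...; values of d, o, r at index 0 are ignored.
   The window {t-\<tau>+1 .. t} is restricted to slots \<ge> 1 (d_i = r_i = 0 for i \<le> 0). *)
definition window :: "nat \<Rightarrow> nat \<Rightarrow> nat set" where
  "window \<tau> t = {i. 1 \<le> i \<and> i \<le> t \<and> t < i + \<tau>}"

definition cost :: "real \<Rightarrow> real \<Rightarrow> (nat \<Rightarrow> nat) \<Rightarrow> nat \<Rightarrow> (nat \<Rightarrow> nat) \<Rightarrow> (nat \<Rightarrow> nat) \<Rightarrow> real" where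
  "cost p \<alpha> d T ov rv =
     (\<Sum>t = 1..T. real (ov t) * p + real (rv t) + \<alpha> * p * (real (d t) - real (ov t)))"

definition feasible :: "nat \<Rightarrow> (nat \<Rightarrow> nat) \<Rightarrow> nat \<Rightarrow> (nat \<Rightarrow> nat) \<Rightarrow> (nat \<Rightarrow> nat) \<Rightarrow> bool" where
  "feasible \<tau> d T ov rv \<longleftrightarrow> (\<forall>t\<in>{1..T}. d t \<le> ov t + (\<Sum>i\<in>window \<tau> t. rv i))"

definition copt :: "real \<Rightarrow> real \<Rightarrow> nat \<Rightarrow> (nat \<Rightarrow> nat) \<Rightarrow> nat \<Rightarrow> real" where
  "copt p \<alpha> \<tau> d T = Inf {cost p \<alpha> d T ov rv | ov rv. feasible \<tau> d T ov rv}"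

(* The while loop at time t, started from state x, runs exactly
   k times where k is the least number of iterations after which
   p * |{i in window: d_i > x_i + k}| \<le> z (each iteration adds 1 to every x_i
   with t-\<tau>+1 \<le> i \<le> t+\<tau>-1, in particular to every x_i in the window). *)
definition alg_k :: "real \<Rightarrow> real \<Rightarrow> nat \<Rightarrow> (nat \<Rightarrow> nat) \<Rightarrow> (nat \<Rightarrow> nat) \<Rightarrow> nat \<Rightarrow> nat" where
  "alg_k p z \<tau> d x t =
     (LEAST k::nat. \<not> (p * real (card {i \<in> window \<tau> t. x i + k < d i}) > z))"

fun alg_x :: "real \<Rightarrow> real \<Rightarrow> nat \<Rightarrow> (nat \<Rightarrow> nat) \<Rightarrow> nat \<Rightarrow> (nat \<Rightarrow> nat)" where
  "alg_x p z \<tau> d 0 = (\<lambda>_. 0)"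
| "alg_x p z \<tau> d (Suc t) =
     (let x = alg_x p z \<tau> d t; k = alg_k p z \<tau> d x (Suc t)
      in (\<lambda>i. if Suc t < i + \<tau> \<and> i < Suc t + \<tau> then x i + k else x i))"

definition alg_r :: "real \<Rightarrow> real \<Rightarrow> nat \<Rightarrow> (nat \<Rightarrow> nat) \<Rightarrow> nat \<Rightarrow> nat" where
  "alg_r p z \<tau> d t = (if t = 0 then 0 else alg_k p z \<tau> d (alg_x p z \<tau> d (t - 1)) t)"

(* o_t = max{d_t - x_t, 0} (truncated nat subtraction) *)
definition alg_o :: "real \<Rightarrow> real \<Rightarrow> nat \<Rightarrow> (nat \<Rightarrow> nat) \<Rightarrow> nat \<Rightarrow> nat" where
  "alg_o p z \<tau> d t = d t - alg_x p z \<tau> d t t"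

end

theory Submission
  imports Defs
begin

lemma lemK:
  fixes G H :: "nat \<Rightarrow> nat" and \<tau> T :: nat
  assumes mG: "mono G" and mH: "mono H" and tau: "1 \<le> \<tau>"
  shows "card {j. \<exists>i\<in>{1..T}. G (i-1) < j \<and> j \<le> G (i-\<tau>) + (H i - H (i-\<tau>))} \<le> H T"
proof -
  define U where "U = {j. \<exists>i\<in>{1..T}. G (i-1) < j \<and> j \<le> G (i-\<tau>) + (H i - H (i-\<tau>))}"
  have finU: "finite U"
  proof (rule finite_subset[of _ "{..G T + H T}"])
    show "U \<subseteq> {..G T + H T}"
    proof
      fix j assume "j \<in> U"
      then obtain i where i: "i \<in> {1..T}" "j \<le> G (i-\<tau>) + (H i - H (i-\<tau>))" unfolding U_def by auto
      have "G (i-\<tau>) \<le> G T" using i mG by (auto intro: monoD)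
      moreover have "H i \<le> H T" using i mH by (auto intro: monoD)
      ultimately show "j \<in> {..G T + H T}" using i by auto
    qed
  qed auto
  have key: "\<forall>i. i\<in>{1..T} \<longrightarrow> G (i-1) < j \<longrightarrow> j \<le> G (i-\<tau>) + (H i - H (i-\<tau>)) \<longrightarrow> card (U \<inter> {..j}) \<le> H i" for j
  proof (induction j rule: less_induct)
    case (less j)
    show ?case
    proof (intro allI impI)
      fix i assume i: "i \<in> {1..T}" and lo: "G (i-1) < j" and hi: "j \<le> G (i-\<tau>) + (H i - H (i-\<tau>))"
      define g where "g = G (i-\<tau>)"
      have gle: "g \<le> G (i-1)" unfolding g_def using tau mG by (auto intro: monoD)
      have Hle: "H (i-\<tau>) \<le> H i" using mH by (auto intro: monoD)
      have sub: "U \<inter> {..j} \<subseteq> (U \<inter> {..g}) \<union> {g<..j}" by auto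
      have c1: "card (U \<inter> {..j}) \<le> card (U \<inter> {..g}) + card {g<..j}"
        by (rule order_trans[OF card_mono[OF _ sub] card_Un_le]) (use finU in auto)
      have c2: "card {g<..j} \<le> H i - H (i-\<tau>)" using hi unfolding g_def by simp
      have c3: "card (U \<inter> {..g}) \<le> H (i-\<tau>)"
      proof (cases "U \<inter> {..g} = {}")
        case True then show ?thesis by simp
      next
        case False
        define j' where "j' = Max (U \<inter> {..g})"
        have fin: "finite (U \<inter> {..g})" using finU by auto
        have j'in: "j' \<in> U \<inter> {..g}" unfolding j'_def using Max_in[OF fin False] .
        have eq: "U \<inter> {..g} = U \<inter> {..j'}"
          using j'in Max_ge[OF fin] unfolding j'_def by auto
        from j'in obtain i' where i': "i' \<in> {1..T}" "G (i'-1) < j'" "j' \<le> G (i'-\<tau>) + (H i' - H (i'-\<tau>))"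
          unfolding U_def by auto
        have "j' < j" using j'in gle lo by auto
        with less.IH i' have IH: "card (U \<inter> {..j'}) \<le> H i'" by blast
        have "i' \<le> i - \<tau>"
        proof (rule ccontr)
          assume "\<not> i' \<le> i - \<tau>"
          then have "i - \<tau> \<le> i' - 1" by auto
          then have "G (i-\<tau>) \<le> G (i'-1)" using mG by (auto intro: monoD)
          then show False using i'(2) j'in unfolding g_def by auto
        qed
        then have "H i' \<le> H (i-\<tau>)" using mH by (auto intro: monoD)
        then show ?thesis using IH eq by simp
      qed
      show "card (U \<inter> {..j}) \<le> H i" using c1 c2 c3 Hle by linarith
    qed
  qed
  show ?thesis
  proof (cases "U = {}")
    case True then show ?thesis unfolding U_def[symmetric] by simp
  next
    case False
    define j where "j = Max U"
    have jin: "j \<in> U" unfolding j_def using Max_in[OF finU False] .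
    have eq: "U \<inter> {..j} = U" using Max_ge[OF finU] unfolding j_def by auto
    from jin obtain i where i: "i \<in> {1..T}" "G (i-1) < j" "j \<le> G (i-\<tau>) + (H i - H (i-\<tau>))"
      unfolding U_def by auto
    have "card U \<le> H i" using key[of j] i eq by auto
    also have "H i \<le> H T" using i mH by (auto intro: monoD)
    finally show ?thesis unfolding U_def by simp
  qed
qed


lemma chain:
  fixes G H d :: "nat \<Rightarrow> nat" and \<tau> T :: nat and S :: "nat set"
  assumes mG: "mono G" and mH: "mono H"
  and S: "S \<subseteq> {1..T}"
  and dead: "\<And>p i. p \<in> S \<Longrightarrow> i \<in> S \<Longrightarrow> p < i \<Longrightarrow> i < p + \<tau> \<Longrightarrow>
              0 < G (p-\<tau>) + min (d p) (H p - H (p-\<tau>)) - G p \<Longrightarrow> G (p-\<tau>) + d p \<le> G i"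
  shows "(\<Sum>i\<in>S. G (i-\<tau>) + min (d i) (H i - H (i-\<tau>)) - G i) \<le> H T"
proof -
  define Top where "Top i = G (i-\<tau>) + min (d i) (H i - H (i-\<tau>))" for i
  define u where "u i = Top i - G i" for i
  have finS: "finite S" using S finite_subset by blast
  have TopH: "Top i \<le> G (i-\<tau>) + (H i - H (i-\<tau>))" for i unfolding Top_def by simp
  have Hm: "H (i-\<tau>) \<le> H i" for i using mH by (auto intro: monoD)
  have claim: "i \<in> S \<Longrightarrow> 0 < u i \<Longrightarrow> i - \<tau> \<le> t \<Longrightarrow> t \<le> i \<Longrightarrow>
      int (\<Sum>p\<in>S \<inter> {..i}. u p) + int (G t) \<le> int (Top i) + int (H t)" for i t
  proof (induction i arbitrary: t rule: less_induct)
    case (less i)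
    have Gti: "G t \<le> G i" using less.prems mG by (auto intro: monoD)
    have ui: "int (u i) = int (Top i) - int (G i)" using less.prems(2) unfolding u_def by simp
    define P where "P = {p\<in>S. p < i \<and> 0 < u p}"
    have finP: "finite P" using finS unfolding P_def by auto
    show ?case
    proof (cases "P = {}")
      case True
      have "(\<Sum>p\<in>S \<inter> {..i}. u p) = (\<Sum>p\<in>{i}. u p)"
      proof (rule sum.mono_neutral_right)
        show "finite (S \<inter> {..i})" using finS by auto
        show "{i} \<subseteq> S \<inter> {..i}" using less.prems by auto
        show "\<forall>p\<in>S \<inter> {..i} - {i}. u p = 0" using True unfolding P_def by auto
      qed
      then show ?thesis using ui Gti by simp
    next
      case False
      define pm where "pm = Max P"
      have pmP: "pm \<in> P" unfolding pm_def using Max_in[OF finP False] .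
      have pmmax: "p \<in> P \<Longrightarrow> p \<le> pm" for p unfolding pm_def using Max_ge[OF finP] by auto
      have pm: "pm \<in> S" "pm < i" "0 < u pm" using pmP unfolding P_def by auto
      have split: "(\<Sum>p\<in>S \<inter> {..i}. u p) = (\<Sum>p\<in>S \<inter> {..pm}. u p) + u i"
      proof -
        have A: "S \<inter> {..i} = (S \<inter> {..pm}) \<union> ((S \<inter> {pm<..<i}) \<union> {i})" using pm less.prems by auto
        have "(\<Sum>p\<in>S \<inter> {..i}. u p) = (\<Sum>p\<in>S \<inter> {..pm}. u p) + (\<Sum>p\<in>(S \<inter> {pm<..<i}) \<union> {i}. u p)"
          unfolding A by (rule sum.union_disjoint) (use finS pm(2) in auto)
        also have "(\<Sum>p\<in>(S \<inter> {pm<..<i}) \<union> {i}. u p) = (\<Sum>p\<in>S \<inter> {pm<..<i}. u p) + u i"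
          by (subst sum.union_disjoint) (use finS in auto)
        also have "(\<Sum>p\<in>S \<inter> {pm<..<i}. u p) = 0"
        proof (rule sum.neutral, rule ballI)
          fix p assume "p \<in> S \<inter> {pm<..<i}"
          then show "u p = 0" using pmmax[of p] unfolding P_def by fastforce
        qed
        finally show ?thesis by simp
      qed
      show ?thesis
      proof (cases "pm \<le> t")
        case True
        have "int (\<Sum>p\<in>S \<inter> {..pm}. u p) + int (G (pm-\<tau>)) \<le> int (Top pm) + int (H (pm-\<tau>))"
          using less.IH[OF pm(2) pm(1) pm(3)] by simp
        also have "\<dots> \<le> int (G (pm-\<tau>)) + int (H pm)" using TopH[of pm] Hm[of pm] by linarith
        finally have "(\<Sum>p\<in>S \<inter> {..pm}. u p) \<le> H pm" by linarith
        moreover have "H pm \<le> H t" using True mH by (auto intro: monoD)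
        ultimately have "int (\<Sum>p\<in>S \<inter> {..pm}. u p) \<le> int (H t)" by linarith
        moreover have "int (\<Sum>p\<in>S \<inter> {..i}. u p) = int (\<Sum>p\<in>S \<inter> {..pm}. u p) + int (u i)"
          using split by (metis of_nat_add)
        moreover have "int (G t) \<le> int (G i)" using Gti by simp
        ultimately show ?thesis using ui by linarith
      next
        case False
        have tpm: "pm - \<tau> \<le> t" using less.prems(3) pm(2) by linarith
        have IH: "int (\<Sum>p\<in>S \<inter> {..pm}. u p) + int (G t) \<le> int (Top pm) + int (H t)"
          using less.IH[OF pm(2) pm(1) pm(3) tpm] False by simp
        have "i < pm + \<tau>" using less.prems(3) False by linarith
        then have "G (pm-\<tau>) + d pm \<le> G i"
          using dead[OF pm(1) less.prems(1) pm(2)] pm(3) unfolding u_def Top_def by blast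
        then have "Top pm \<le> G i" unfolding Top_def by simp
        moreover have "int (\<Sum>p\<in>S \<inter> {..i}. u p) = int (\<Sum>p\<in>S \<inter> {..pm}. u p) + int (u i)"
          using split by (metis of_nat_add)
        ultimately show ?thesis using IH ui by linarith
      qed
    qed
  qed
  define Q where "Q = {p\<in>S. 0 < u p}"
  have finQ: "finite Q" using finS unfolding Q_def by auto
  have "(\<Sum>i\<in>S. u i) \<le> H T"
  proof (cases "Q = {}")
    case True
    then have "(\<Sum>i\<in>S. u i) = 0" unfolding Q_def by (intro sum.neutral) auto
    then show ?thesis by simp
  next
    case False
    define m where "m = Max Q"
    have mQ: "m \<in> Q" unfolding m_def using Max_in[OF finQ False] .
    have mmax: "p \<in> Q \<Longrightarrow> p \<le> m" for p unfolding m_def using Max_ge[OF finQ] by auto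
    have eq: "(\<Sum>i\<in>S. u i) = (\<Sum>i\<in>S \<inter> {..m}. u i)"
    proof (rule sum.mono_neutral_right)
      show "finite S" by (rule finS)
      show "S \<inter> {..m} \<subseteq> S" by auto
      show "\<forall>i\<in>S - S \<inter> {..m}. u i = 0" using mmax unfolding Q_def by fastforce
    qed
    have "int (\<Sum>p\<in>S \<inter> {..m}. u p) + int (G (m-\<tau>)) \<le> int (Top m) + int (H (m-\<tau>))"
      using claim[of m "m-\<tau>"] mQ unfolding Q_def by simp
    also have "\<dots> \<le> int (G (m-\<tau>)) + int (H m)" using TopH[of m] Hm[of m] by linarith
    finally have "(\<Sum>i\<in>S. u i) \<le> H m" using eq by linarith
    also have "H m \<le> H T"
    proof -
      have "m \<le> T" using mQ S unfolding Q_def by auto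
      then show ?thesis using mH by (auto intro: monoD)
    qed
    finally show ?thesis .
  qed
  then show ?thesis unfolding u_def Top_def by simp
qed

lemma coloring:
  fixes A :: "nat set" and R :: "nat \<Rightarrow> nat \<Rightarrow> bool" and Dn N :: nat
  assumes AN: "A \<subseteq> {..<N}" and deg: "\<And>i. i \<in> A \<Longrightarrow> card {p\<in>A. p < i \<and> R p i} < Dn"
  shows "\<exists>col. (\<forall>i\<in>A. col i < Dn) \<and> (\<forall>p\<in>A. \<forall>i\<in>A. p < i \<and> R p i \<longrightarrow> col p \<noteq> col i)"
proof -
  have "\<exists>col. (\<forall>i\<in>A \<inter> {..<n}. col i < Dn) \<and>
     (\<forall>p\<in>A \<inter> {..<n}. \<forall>i\<in>A \<inter> {..<n}. p < i \<and> R p i \<longrightarrow> col p \<noteq> col i)" for n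
  proof (induction n)
    case 0 then show ?case by auto
  next
    case (Suc n)
    then obtain col where c1: "\<forall>i\<in>A \<inter> {..<n}. col i < Dn"
      and c2: "\<forall>p\<in>A \<inter> {..<n}. \<forall>i\<in>A \<inter> {..<n}. p < i \<and> R p i \<longrightarrow> col p \<noteq> col i" by blast
    show ?case
    proof (cases "n \<in> A")
      case False
      then have "A \<inter> {..<Suc n} = A \<inter> {..<n}" using less_Suc_eq by auto
      then show ?thesis using c1 c2 by metis
    next
      case True
      define B where "B = col ` {p\<in>A. p < n \<and> R p n}"
      have "card B \<le> card {p\<in>A. p < n \<and> R p n}" unfolding B_def
        by (rule card_image_le) simp
      then have "card B < card {..<Dn}" using deg[OF True] by simp
      moreover have "finite B" unfolding B_def by simp
      ultimately have "\<not> {..<Dn} \<subseteq> B"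
        using card_mono[of B "{..<Dn}"] by (meson card_mono not_le)
      then obtain c where c: "c < Dn" "c \<notin> B" by auto
      define col' where "col' = col(n := c)"
      have "\<forall>i\<in>A \<inter> {..<Suc n}. col' i < Dn" using c1 c unfolding col'_def
        using less_Suc_eq by auto
      moreover have "\<forall>p\<in>A \<inter> {..<Suc n}. \<forall>i\<in>A \<inter> {..<Suc n}. p < i \<and> R p i \<longrightarrow> col' p \<noteq> col' i"
      proof (intro ballI impI)
        fix p i assume p: "p \<in> A \<inter> {..<Suc n}" and i: "i \<in> A \<inter> {..<Suc n}" and pi: "p < i \<and> R p i"
        show "col' p \<noteq> col' i"
        proof (cases "i = n")
          case True
          then have "col p \<in> B" using p pi unfolding B_def by auto
          then show ?thesis using c True pi unfolding col'_def by auto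
        next
          case False
          then have "i < n" using i by auto
          then show ?thesis using c2 p i pi unfolding col'_def by auto
        qed
      qed
      ultimately show ?thesis by blast
    qed
  qed
  from this[of N] show ?thesis using AN by (metis inf.absorb1)
qed
lemma colsum:
  fixes G H d :: "nat \<Rightarrow> nat" and \<tau> T Dn :: nat
  assumes mG: "mono G" and mH: "mono H" and tau: "1 \<le> \<tau>"
  and sparse: "\<And>t. t \<in> {1..T} \<Longrightarrow> card {p\<in>{1..T}. p \<le> t \<and> t < p + \<tau> \<and> G t < G (p-\<tau>) + d p} \<le> Dn"
  shows "(\<Sum>i\<in>{1..T}. G (i-\<tau>) + min (d i) (H i - H (i-\<tau>)) - G i) \<le> Dn * H T"
proof -
  define u where "u i = G (i-\<tau>) + min (d i) (H i - H (i-\<tau>)) - G i" for i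
  define A where "A = {i\<in>{1..T}. 0 < u i}"
  define R where "R p i = (i < p + \<tau> \<and> G i < G (p-\<tau>) + d p)" for p i
  have Asub: "A \<subseteq> {..<Suc T}" unfolding A_def by auto
  have deg: "card {p\<in>A. p < i \<and> R p i} < Dn" if iA: "i \<in> A" for i
  proof -
    have "G i < G (i-\<tau>) + d i" using iA unfolding A_def u_def by auto
    then have sub: "insert i {p\<in>A. p < i \<and> R p i} \<subseteq> {p\<in>{1..T}. p \<le> i \<and> i < p + \<tau> \<and> G i < G (p-\<tau>) + d p}"
      using iA tau unfolding A_def R_def by auto
    have "card (insert i {p\<in>A. p < i \<and> R p i}) = Suc (card {p\<in>A. p < i \<and> R p i})"
      by (rule card_insert_disjoint) (use Asub finite_subset in auto)
    moreover have "card (insert i {p\<in>A. p < i \<and> R p i}) \<le> Dn"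
      using card_mono[OF _ sub] sparse[of i] iA unfolding A_def by force
    ultimately show ?thesis by simp
  qed
  obtain col where col1: "\<forall>i\<in>A. col i < Dn"
    and col2: "\<forall>p\<in>A. \<forall>i\<in>A. p < i \<and> R p i \<longrightarrow> col p \<noteq> col i"
    using coloring[OF Asub deg] by blast
  have cls: "(\<Sum>i\<in>{x\<in>A. col x = c}. u i) \<le> H T" for c
    unfolding u_def
  proof (rule chain[OF mG mH])
    show "{x \<in> A. col x = c} \<subseteq> {1..T}" unfolding A_def by auto
    fix p i assume p: "p \<in> {x \<in> A. col x = c}" and i: "i \<in> {x \<in> A. col x = c}" and pi: "p < i" "i < p + \<tau>"
    show "G (p - \<tau>) + d p \<le> G i"
    proof (rule ccontr)
      assume "\<not> G (p - \<tau>) + d p \<le> G i"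
      then have "R p i" using pi unfolding R_def by auto
      moreover have "p \<in> A" "i \<in> A" "col p = col i" using p i by auto
      ultimately show False using col2 pi by blast
    qed
  qed
  have "(\<Sum>i\<in>{1..T}. u i) = (\<Sum>i\<in>A. u i)"
    by (rule sum.mono_neutral_right) (auto simp: A_def)
  also have "\<dots> = (\<Sum>c\<in>{..<Dn}. \<Sum>i\<in>{x\<in>A. col x = c}. u i)"
    by (rule sum.group[symmetric]) (use col1 Asub finite_subset in auto)
  also have "\<dots> \<le> (\<Sum>c\<in>{..<Dn}. H T)" by (rule sum_mono) (rule cls)
  also have "\<dots> = Dn * H T" by simp
  finally show ?thesis unfolding u_def .
qed


locale inst =
  fixes p z :: real and \<tau> :: nat and d :: "nat \<Rightarrow> nat"
  assumes p_pos: "0 < p" and z_pos: "0 < z" and tau: "1 \<le> \<tau>"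
begin

definition kk where "kk s = alg_r p z \<tau> d s"
definition G where "G t = (\<Sum>s\<in>{1..t}. kk s)"

lemma G_mono: "mono G"
  unfolding mono_def G_def by (auto intro: sum_mono2)

lemma G_le: "a \<le> b \<Longrightarrow> G a \<le> G b"
  using G_mono by (auto intro: monoD)

lemma G_0[simp]: "G 0 = 0" unfolding G_def by simp

lemma G_Suc: "G (Suc t) = G t + kk (Suc t)"
  unfolding G_def by simp

lemma kk_Suc: "kk (Suc t) = alg_k p z \<tau> d (alg_x p z \<tau> d t) (Suc t)"
  unfolding kk_def alg_r_def by simp

lemma x_eq: "t < i + \<tau> \<Longrightarrow> alg_x p z \<tau> d t i = G t - G (i - \<tau>)"
proof (induction t)
  case 0 then show ?case by simp
next
  case (Suc t)
  have IH: "alg_x p z \<tau> d t i = G t - G (i - \<tau>)" using Suc by simp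
  have e: "alg_x p z \<tau> d (Suc t) i = (if i < Suc t + \<tau> then alg_x p z \<tau> d t i + kk (Suc t) else alg_x p z \<tau> d t i)"
    using Suc.prems by (simp add: Let_def kk_Suc)
  show ?case
  proof (cases "i < Suc t + \<tau>")
    case True
    then have "i - \<tau> \<le> t" by linarith
    then have "G (i-\<tau>) \<le> G t" by (rule G_le)
    then show ?thesis using e True IH G_Suc[of t] by simp
  next
    case False
    then have "Suc t \<le> i - \<tau>" by linarith
    then have "G (Suc t) \<le> G (i-\<tau>)" "G t \<le> G (i-\<tau>)" using G_le[of "Suc t"] G_le[of t] by auto
    then show ?thesis using e False IH by simp
  qed
qed

lemma alg_o_eq: "alg_o p z \<tau> d t = d t - (G t - G (t - \<tau>))"
  unfolding alg_o_def using x_eq[of t t] tau by simp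

lemma alg_k_ex: "\<exists>k. \<not> z < p * real (card {i\<in>window \<tau> t. x i + k < d i})"
proof -
  have "{i\<in>window \<tau> t. x i + (\<Sum>i\<le>t. d i) < d i} = {}"
  proof -
    have "d i \<le> (\<Sum>i\<le>t. d i)" if "i \<le> t" for i
      using that by (intro member_le_sum) auto
    then show ?thesis unfolding window_def by fastforce
  qed
  then have "\<not> z < p * real (card {i\<in>window \<tau> t. x i + (\<Sum>i\<le>t. d i) < d i})"
    using z_pos by (metis card.empty mult_zero_right not_less_iff_gr_or_eq of_nat_0)
  then show ?thesis by blast
qed

lemma kk_spec: "1 \<le> t \<Longrightarrow> \<not> z < p * real (card {i\<in>window \<tau> t. alg_x p z \<tau> d (t-1) i + kk t < d i})"
proof -
  assume t: "1 \<le> t"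
  then obtain t' where t': "t = Suc t'" by (cases t) auto
  show ?thesis unfolding t' kk_Suc alg_k_def diff_Suc_1
    by (rule LeastI_ex) (rule alg_k_ex)
qed

lemma kk_min: "1 \<le> t \<Longrightarrow> c < kk t \<Longrightarrow> z < p * real (card {i\<in>window \<tau> t. alg_x p z \<tau> d (t-1) i + c < d i})"
proof -
  assume t: "1 \<le> t" and c: "c < kk t"
  then obtain t' where t': "t = Suc t'" by (cases t) auto
  from c show ?thesis unfolding t' kk_Suc alg_k_def diff_Suc_1
    using not_less_Least by force
qed

lemma win_x: "i \<in> window \<tau> t \<Longrightarrow> 1 \<le> t \<Longrightarrow> alg_x p z \<tau> d (t-1) i = G (t-1) - G (i-\<tau>) \<and> G (i-\<tau>) \<le> G (t-1)"
  unfolding window_def using tau by (auto intro!: x_eq G_le)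

lemma Gt: "1 \<le> t \<Longrightarrow> G t = G (t-1) + kk t"
  using G_Suc[of "t-1"] by simp

lemma sparse: "1 \<le> t \<Longrightarrow> p * real (card {i\<in>window \<tau> t. G t < G (i-\<tau>) + d i}) \<le> z"
proof -
  assume t: "1 \<le> t"
  have "{i\<in>window \<tau> t. alg_x p z \<tau> d (t-1) i + kk t < d i} = {i\<in>window \<tau> t. G t < G (i-\<tau>) + d i}"
  proof (intro Collect_cong conj_cong refl)
    fix i assume "i \<in> window \<tau> t"
    from win_x[OF this t] show "(alg_x p z \<tau> d (t-1) i + kk t < d i) = (G t < G (i-\<tau>) + d i)"
      using Gt[OF t] by arith
  qed
  then show ?thesis using kk_spec[OF t] by simp
qed

lemma minimal: "1 \<le> t \<Longrightarrow> G (t-1) < j \<Longrightarrow> j \<le> G t \<Longrightarrow> z < p * real (card {i\<in>window \<tau> t. j \<le> G (i-\<tau>) + d i})"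
proof -
  assume t: "1 \<le> t" and j1: "G (t-1) < j" and j2: "j \<le> G t"
  define c where "c = j - G (t-1) - 1"
  have c: "c < kk t" using Gt[OF t] j1 j2 unfolding c_def by linarith
  have "{i\<in>window \<tau> t. alg_x p z \<tau> d (t-1) i + c < d i} = {i\<in>window \<tau> t. j \<le> G (i-\<tau>) + d i}"
  proof (intro Collect_cong conj_cong refl)
    fix i assume "i \<in> window \<tau> t"
    from win_x[OF this t] show "(alg_x p z \<tau> d (t-1) i + c < d i) = (j \<le> G (i-\<tau>) + d i)"
      using j1 unfolding c_def by arith
  qed
  then show ?thesis using kk_min[OF t c] by simp
qed


lemma win_sum: fixes rv :: "nat \<Rightarrow> nat" shows "(\<Sum>a\<in>window \<tau> i. rv a) = (\<Sum>a\<in>{1..i}. rv a) - (\<Sum>a\<in>{1..i-\<tau>}. rv a)"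
proof -
  have w: "window \<tau> i = {1..i} - {1..i-\<tau>}" unfolding window_def by auto
  have s: "{1..i-\<tau>} \<subseteq> {1..i}" by auto
  show ?thesis unfolding w by (rule sum_diff_nat) (use s in auto)
qed

lemma C1:
  fixes rv :: "nat \<Rightarrow> nat" and T :: nat
  defines "H \<equiv> \<lambda>t. \<Sum>a\<in>{1..t}. rv a"
  shows "z * real (G T) \<le> z * real (H T) + p * real (\<Sum>i\<in>{1..T}. d i - (H i - H (i-\<tau>)))"
proof -
  have mH: "mono H" unfolding H_def mono_def by (auto intro: sum_mono2)
  define U where "U = {j. \<exists>i\<in>{1..T}. G (i-1) < j \<and> j \<le> G (i-\<tau>) + (H i - H (i-\<tau>))}"
  have cU: "card U \<le> H T" unfolding U_def by (rule lemK[OF G_mono mH tau])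
  have finU: "finite U"
  proof (rule finite_subset[of _ "{..G T + H T}"])
    show "U \<subseteq> {..G T + H T}"
    proof
      fix j assume "j \<in> U"
      then obtain i where i: "i \<in> {1..T}" "j \<le> G (i-\<tau>) + (H i - H (i-\<tau>))" unfolding U_def by auto
      have "G (i-\<tau>) \<le> G T" using i by (auto intro: G_le)
      moreover have "H i \<le> H T" using i mH by (auto intro: monoD)
      ultimately show "j \<in> {..G T + H T}" using i by auto
    qed
  qed auto
  define J where "J = {1..G T} - U"
  define s where "s j = (LEAST s. j \<le> G s)" for j
  have sj: "1 \<le> s j \<and> s j \<le> T \<and> G (s j - 1) < j \<and> j \<le> G (s j)" if "j \<in> J" for j
  proof -
    have j: "1 \<le> j" "j \<le> G T" using that unfolding J_def by auto
    have a: "j \<le> G (s j)" unfolding s_def by (rule LeastI[of _ T]) (rule j(2))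
    have b: "s j \<le> T" unfolding s_def by (rule Least_le) (rule j(2))
    have c: "1 \<le> s j" using a j(1) by (cases "s j") auto
    have "\<not> j \<le> G (s j - 1)" unfolding s_def
      by (rule not_less_Least) (use c in \<open>simp add: s_def\<close>)
    then show ?thesis using a b c by auto
  qed
  define n where "n j = card {i\<in>window \<tau> (s j). j \<le> G (i-\<tau>) + d i}" for j
  have zn: "z < p * real (n j)" if "j \<in> J" for j
    unfolding n_def using minimal sj[OF that] by blast
  have finJ: "finite J" unfolding J_def by auto
  have "card {1..G T} \<le> card U + card J"
  proof -
    have "{1..G T} \<subseteq> U \<union> J" unfolding J_def by auto
    then have "card {1..G T} \<le> card (U \<union> J)" using finU finJ by (intro card_mono) auto
    also have "\<dots> \<le> card U + card J" by (rule card_Un_le)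
    finally show ?thesis .
  qed
  then have GT: "G T \<le> card U + card J" by simp
  have zJ: "z * real (card J) \<le> p * real (\<Sum>j\<in>J. n j)"
  proof -
    have "z * real (card J) = (\<Sum>j\<in>J. z)" by simp
    also have "\<dots> \<le> (\<Sum>j\<in>J. p * real (n j))" by (rule sum_mono) (use zn in \<open>auto intro: less_imp_le\<close>)
    also have "\<dots> = p * real (\<Sum>j\<in>J. n j)" by (simp add: sum_distrib_left)
    finally show ?thesis .
  qed
  have nsum: "(\<Sum>j\<in>J. n j) \<le> (\<Sum>i\<in>{1..T}. d i - (H i - H (i-\<tau>)))"
  proof -
    define P where "P j i = (i \<in> window \<tau> (s j) \<and> j \<le> G (i-\<tau>) + d i)" for j i
    have nj: "n j = (\<Sum>i\<in>{1..T}. if P j i then 1 else 0)" if "j \<in> J" for j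
    proof -
      have "{i\<in>window \<tau> (s j). j \<le> G (i-\<tau>) + d i} = {i\<in>{1..T}. P j i}"
        using sj[OF that] unfolding P_def window_def by auto
      moreover have "card {i\<in>{1..T}. P j i} = (\<Sum>i\<in>{1..T}. if P j i then 1 else 0)"
        by (subst sum.inter_filter[symmetric]) auto
      ultimately show ?thesis unfolding n_def by simp
    qed
    have "(\<Sum>j\<in>J. n j) = (\<Sum>j\<in>J. \<Sum>i\<in>{1..T}. if P j i then 1 else 0)"
      using nj by (rule sum.cong[OF refl])
    also have "\<dots> = (\<Sum>i\<in>{1..T}. \<Sum>j\<in>J. if P j i then 1 else 0)" by (rule sum.swap)
    also have "\<dots> \<le> (\<Sum>i\<in>{1..T}. d i - (H i - H (i-\<tau>)))"
    proof (rule sum_mono)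
      fix i assume i: "i \<in> {1..T}"
      have "(\<Sum>j\<in>J. if P j i then 1 else 0) = card {j\<in>J. P j i}"
        using finJ by (subst sum.inter_filter[symmetric]) auto
      also have "\<dots> \<le> card {G (i-\<tau>) + (H i - H (i-\<tau>))<..G (i-\<tau>) + d i}"
      proof (rule card_mono)
        show "{j \<in> J. P j i} \<subseteq> {G (i-\<tau>) + (H i - H (i-\<tau>))<..G (i-\<tau>) + d i}"
        proof
          fix j assume "j \<in> {j \<in> J. P j i}"
          then have jJ: "j \<in> J" and Pji: "P j i" by auto
          have w: "i \<le> s j" "s j < i + \<tau>" "1 \<le> i" using Pji unfolding P_def window_def by auto
          have "G (i-1) \<le> G (s j - 1)" using w by (intro G_le) auto
          then have "G (i-1) < j" using sj[OF jJ] by auto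
          moreover have "j \<notin> U" using jJ unfolding J_def by auto
          ultimately have "\<not> j \<le> G (i-\<tau>) + (H i - H (i-\<tau>))" using i unfolding U_def by auto
          then show "j \<in> {G (i-\<tau>) + (H i - H (i-\<tau>))<..G (i-\<tau>) + d i}" using Pji unfolding P_def by auto
        qed
      qed simp
      also have "\<dots> = d i - (H i - H (i-\<tau>))" by simp
      finally show "(\<Sum>j\<in>J. if P j i then 1 else 0) \<le> d i - (H i - H (i-\<tau>))" .
    qed
    finally show ?thesis .
  qed
  have "z * real (G T) \<le> z * real (card U) + z * real (card J)"
    using GT z_pos by (simp add: distrib_left[symmetric])
  also have "\<dots> \<le> z * real (H T) + p * real (\<Sum>j\<in>J. n j)"
    using cU zJ z_pos by (simp add: add_mono)
  also have "\<dots> \<le> z * real (H T) + p * real (\<Sum>i\<in>{1..T}. d i - (H i - H (i-\<tau>)))"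
    using p_pos by (intro add_left_mono mult_left_mono of_nat_mono nsum) auto
  finally show ?thesis .
qed


lemma ptl: fixes a g0 g1 r :: nat shows "g0 \<le> g1 \<Longrightarrow> a - (g1 - g0) \<le> (g0 + min a r - g1) + (a - r)"
  by (cases "a \<le> r") (simp_all add: min_def)

lemma C2:
  fixes rv :: "nat \<Rightarrow> nat" and T :: nat
  defines "H \<equiv> \<lambda>t. \<Sum>a\<in>{1..t}. rv a"
  shows "p * real (\<Sum>i\<in>{1..T}. d i - (G i - G (i-\<tau>))) \<le> z * real (H T) + p * real (\<Sum>i\<in>{1..T}. d i - (H i - H (i-\<tau>)))"
proof -
  have mH: "mono H" unfolding H_def mono_def by (auto intro: sum_mono2)
  define Dn where "Dn = nat \<lfloor>z/p\<rfloor>"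
  have zp: "0 \<le> z/p" using z_pos p_pos by simp
  have pDn: "p * real Dn \<le> z"
  proof -
    have "real Dn \<le> z/p" unfolding Dn_def by (rule of_nat_floor[OF zp])
    then have "p * real Dn \<le> p * (z/p)" using p_pos by (intro mult_left_mono) auto
    also have "p * (z/p) = z" using p_pos by simp
    finally show ?thesis .
  qed
  have sp: "card {q\<in>{1..T}. q \<le> t \<and> t < q + \<tau> \<and> G t < G (q-\<tau>) + d q} \<le> Dn" if t: "t \<in> {1..T}" for t
  proof -
    define c where "c = card {i\<in>window \<tau> t. G t < G (i-\<tau>) + d i}"
    have "card {q\<in>{1..T}. q \<le> t \<and> t < q + \<tau> \<and> G t < G (q-\<tau>) + d q} \<le> c"
      unfolding c_def by (rule card_mono) (auto simp: window_def)
    moreover have "c \<le> Dn"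
    proof -
      have "p * real c \<le> z" unfolding c_def using sparse t by auto
      then have "real c \<le> z/p" using p_pos by (simp add: pos_le_divide_eq mult.commute)
      then have "int c \<le> \<lfloor>z/p\<rfloor>" by (simp add: le_floor_iff)
      then show ?thesis unfolding Dn_def by linarith
    qed
    ultimately show ?thesis by simp
  qed
  have cs: "(\<Sum>i\<in>{1..T}. G (i-\<tau>) + min (d i) (H i - H (i-\<tau>)) - G i) \<le> Dn * H T"
    by (rule colsum[OF G_mono mH tau sp])
  have pt: "d i - (G i - G (i-\<tau>)) \<le> (G (i-\<tau>) + min (d i) (H i - H (i-\<tau>)) - G i) + (d i - (H i - H (i-\<tau>)))" for i
    by (rule ptl) (rule G_le, simp)
  have "(\<Sum>i\<in>{1..T}. d i - (G i - G (i-\<tau>))) \<le> (\<Sum>i\<in>{1..T}. G (i-\<tau>) + min (d i) (H i - H (i-\<tau>)) - G i) + (\<Sum>i\<in>{1..T}. d i - (H i - H (i-\<tau>)))"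
    unfolding sum.distrib[symmetric] by (rule sum_mono) (rule pt)
  also have "\<dots> \<le> Dn * H T + (\<Sum>i\<in>{1..T}. d i - (H i - H (i-\<tau>)))" by (rule add_right_mono[OF cs])
  finally have "real (\<Sum>i\<in>{1..T}. d i - (G i - G (i-\<tau>))) \<le> real (Dn * H T + (\<Sum>i\<in>{1..T}. d i - (H i - H (i-\<tau>))))"
    by (rule of_nat_mono)
  then have "real (\<Sum>i\<in>{1..T}. d i - (G i - G (i-\<tau>))) \<le> real Dn * real (H T) + real (\<Sum>i\<in>{1..T}. d i - (H i - H (i-\<tau>)))"
    by (simp only: of_nat_add of_nat_mult)
  then have "p * real (\<Sum>i\<in>{1..T}. d i - (G i - G (i-\<tau>))) \<le> p * (real Dn * real (H T) + real (\<Sum>i\<in>{1..T}. d i - (H i - H (i-\<tau>))))"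
    using p_pos by (intro mult_left_mono) auto
  also have "\<dots> = p * real Dn * real (H T) + p * real (\<Sum>i\<in>{1..T}. d i - (H i - H (i-\<tau>)))"
    by (simp only: distrib_left mult.assoc)
  finally have X: "p * real (\<Sum>i\<in>{1..T}. d i - (G i - G (i-\<tau>))) \<le> p * real Dn * real (H T) + p * real (\<Sum>i\<in>{1..T}. d i - (H i - H (i-\<tau>)))" .
  have "p * real Dn * real (H T) \<le> z * real (H T)"
    using pDn by (intro mult_right_mono) auto
  then show ?thesis using X by linarith
qed

lemma aux4: fixes a b c y h :: real
  assumes "a \<le> b" "c \<le> h + a" "y \<le> h + a" shows "c + y \<le> 2 * (h + b)" using assms by (simp add: algebra_simps)

theorem core:
  fixes rv ov :: "nat \<Rightarrow> nat" and T :: nat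
  assumes feas: "feasible \<tau> d T ov rv"
  shows "z * real (\<Sum>t\<in>{1..T}. alg_r p z \<tau> d t) + p * real (\<Sum>t\<in>{1..T}. alg_o p z \<tau> d t)
         \<le> 2 * (z * real (\<Sum>t\<in>{1..T}. rv t) + p * real (\<Sum>t\<in>{1..T}. ov t))"
proof -
  define H where "H = (\<lambda>t. \<Sum>a\<in>{1..t}. rv a)"
  have GT: "(\<Sum>t\<in>{1..T}. alg_r p z \<tau> d t) = G T" unfolding G_def kk_def ..
  have ao: "(\<Sum>t\<in>{1..T}. alg_o p z \<tau> d t) = (\<Sum>i\<in>{1..T}. d i - (G i - G (i-\<tau>)))"
    by (simp add: alg_o_eq)
  have ov: "(\<Sum>i\<in>{1..T}. d i - (H i - H (i-\<tau>))) \<le> (\<Sum>t\<in>{1..T}. ov t)"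
  proof (rule sum_mono)
    fix i assume "i \<in> {1..T}"
    then have "d i \<le> ov i + (\<Sum>a\<in>window \<tau> i. rv a)" using feas unfolding feasible_def by auto
    then show "d i - (H i - H (i-\<tau>)) \<le> ov i" unfolding H_def win_sum by linarith
  qed
  have c1: "z * real (G T) \<le> z * real (H T) + p * real (\<Sum>i\<in>{1..T}. d i - (H i - H (i-\<tau>)))"
    unfolding H_def by (rule C1)
  have c2: "p * real (\<Sum>i\<in>{1..T}. d i - (G i - G (i-\<tau>))) \<le> z * real (H T) + p * real (\<Sum>i\<in>{1..T}. d i - (H i - H (i-\<tau>)))"
    unfolding H_def by (rule C2)
  have "p * real (\<Sum>i\<in>{1..T}. d i - (H i - H (i-\<tau>))) \<le> p * real (\<Sum>t\<in>{1..T}. ov t)"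
    using p_pos by (intro mult_left_mono of_nat_mono ov) auto
  then have "z * real (G T) + p * real (\<Sum>i\<in>{1..T}. d i - (G i - G (i-\<tau>))) \<le> 2 * (z * real (H T) + p * real (\<Sum>t\<in>{1..T}. ov t))"
    using c1 c2 by (rule aux4)
  then show ?thesis unfolding GT ao H_def .
qed

end

lemma h2: fixes x a y :: real shows "x/2 + a \<le> y \<Longrightarrow> a + x \<le> 2*y - a" by (simp add: field_simps)

lemma cost_eq: "cost p \<alpha> d T ov rv = \<alpha> * p * real (\<Sum>t\<in>{1..T}. d t) + (1 - \<alpha>) * p * real (\<Sum>t\<in>{1..T}. ov t) + real (\<Sum>t\<in>{1..T}. rv t)"
proof -
  have "cost p \<alpha> d T ov rv = (\<Sum>t\<in>{1..T}. \<alpha> * p * real (d t) + (1 - \<alpha>) * p * real (ov t) + real (rv t))"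
    unfolding cost_def by (rule sum.cong) (auto simp: algebra_simps)
  also have "\<dots> = \<alpha> * p * real (\<Sum>t\<in>{1..T}. d t) + (1 - \<alpha>) * p * real (\<Sum>t\<in>{1..T}. ov t) + real (\<Sum>t\<in>{1..T}. rv t)"
    by (simp add: sum.distrib sum_distrib_left)
  finally show ?thesis .
qed

theorem proposition1:
  fixes p \<alpha> :: real and \<tau> T :: nat and d :: "nat \<Rightarrow> nat"
  assumes "p > 0" and "0 \<le> \<alpha>" and "\<alpha> < 1" and "\<tau> \<ge> 1"
  shows "cost p \<alpha> d T (alg_o p (1 / (1 - \<alpha>)) \<tau> d) (alg_r p (1 / (1 - \<alpha>)) \<tau> d)
           \<le> (2 - \<alpha>) * copt p \<alpha> \<tau> d T"
proof -
  define z where "z = 1 / (1 - \<alpha>)"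
  have z: "0 < z" unfolding z_def using assms by simp
  interpret inst p z \<tau> d using assms z by unfold_locales auto
  define q where "q = (1 - \<alpha>) * p"
  have q: "0 \<le> q" unfolding q_def using assms by simp
  have pz: "p = q * z" unfolding q_def z_def using assms by simp
  define Dd where "Dd = \<alpha> * p * real (\<Sum>t\<in>{1..T}. d t)"
  define GA where "GA = real (\<Sum>t\<in>{1..T}. alg_r p z \<tau> d t)"
  define OA where "OA = real (\<Sum>t\<in>{1..T}. alg_o p z \<tau> d t)"
  have ALG: "cost p \<alpha> d T (alg_o p z \<tau> d) (alg_r p z \<tau> d) = Dd + q * OA + GA"
    unfolding cost_eq Dd_def q_def OA_def GA_def by simp
  define S where "S = {cost p \<alpha> d T ov rv | ov rv. feasible \<tau> d T ov rv}"
  have copt: "copt p \<alpha> \<tau> d T = Inf S" unfolding copt_def S_def ..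
  have bnd: "GA + q * OA \<le> 2 * (c - Dd)" if "c \<in> S" for c
  proof -
    obtain ov rv where c: "c = cost p \<alpha> d T ov rv" and f: "feasible \<tau> d T ov rv"
      using \<open>c \<in> S\<close> unfolding S_def by auto
    have "z * GA + p * OA \<le> 2 * (z * real (\<Sum>t\<in>{1..T}. rv t) + p * real (\<Sum>t\<in>{1..T}. ov t))"
      unfolding GA_def OA_def by (rule core[OF f])
    then have "z * (GA + q * OA) \<le> z * (2 * (real (\<Sum>t\<in>{1..T}. rv t) + q * real (\<Sum>t\<in>{1..T}. ov t)))"
      unfolding pz by (simp add: algebra_simps)
    then have "GA + q * OA \<le> 2 * (real (\<Sum>t\<in>{1..T}. rv t) + q * real (\<Sum>t\<in>{1..T}. ov t))"
      using z by simp
    moreover have "c = Dd + q * real (\<Sum>t\<in>{1..T}. ov t) + real (\<Sum>t\<in>{1..T}. rv t)"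
      unfolding c cost_eq Dd_def q_def by simp
    ultimately show ?thesis by simp
  qed
  have feas0: "feasible \<tau> d T d (\<lambda>_. 0)" unfolding feasible_def by simp
  define C0 where "C0 = cost p \<alpha> d T d (\<lambda>_. 0)"
  have C0S: "C0 \<in> S" unfolding C0_def S_def using feas0 by blast
  have C0v: "C0 = p * real (\<Sum>t\<in>{1..T}. d t)" unfolding C0_def cost_eq by (simp add: algebra_simps)
  have Sne: "S \<noteq> {}" using C0S by auto
  have lb: "Dd \<le> c" if "c \<in> S" for c
  proof -
    obtain ov rv where c: "c = cost p \<alpha> d T ov rv" using \<open>c \<in> S\<close> unfolding S_def by auto
    have "c = Dd + q * real (\<Sum>t\<in>{1..T}. ov t) + real (\<Sum>t\<in>{1..T}. rv t)"
      unfolding c cost_eq Dd_def q_def by simp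
    moreover have "0 \<le> q * real (\<Sum>t\<in>{1..T}. ov t)" using q by (rule mult_nonneg_nonneg) (rule of_nat_0_le_iff)
    moreover have "0 \<le> real (\<Sum>t\<in>{1..T}. rv t)" by (rule of_nat_0_le_iff)
    ultimately show ?thesis by linarith
  qed
  have bdd: "bdd_below S" using lb by (auto simp: bdd_below_def)
  have low: "(GA + q * OA) / 2 + Dd \<le> Inf S"
    by (rule cInf_greatest[OF Sne]) (use bnd in \<open>fastforce simp: field_simps\<close>)
  have up: "Inf S \<le> p * real (\<Sum>t\<in>{1..T}. d t)"
    using cInf_lower[OF C0S bdd] C0v by simp
  have "cost p \<alpha> d T (alg_o p z \<tau> d) (alg_r p z \<tau> d) = Dd + (GA + q * OA)" using ALG by simp
  also have "\<dots> \<le> 2 * Inf S - Dd" using low by (rule h2)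
  also have "\<dots> \<le> (2 - \<alpha>) * Inf S"
  proof -
    have "\<alpha> * Inf S \<le> \<alpha> * (p * real (\<Sum>t\<in>{1..T}. d t))" using up assms by (intro mult_left_mono) auto
    then show ?thesis unfolding Dd_def by (simp add: algebra_simps)
  qed
  finally show ?thesis unfolding copt z_def .
qed

end
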